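(* Let $G$ be the graph with vertex set $\{1,\dots,12\}$ and edge set consisting of $12,23,34$; $87,76,65$; $12\text{-}11, 11\text{-}10, 10\text{-}9$; $12\text{-}8, 8\text{-}11, 11\text{-}6, 6\text{-}9, 9\text{-}5, 5\text{-}10, 10\text{-}7, 7\text{-}12$; $17, 73, 35$; $82, 26, 64$; $27$; $36$; and all eight edges between $\{2,3\}$ and $\{9,10,11,12\}$. Then: $G$ is prime, $\{P_5,\overline{P_5},C_5\}$-free and not a split graph; $G$ is isomorphic to $\overline{G}$ via the map $1\mapsto3,2\mapsto1,3\mapsto4,4\mapsto2,5\mapsto7,6\mapsto5,7\mapsto8,8\mapsto6,9\mapsto11,10\mapsto9,11\mapsto12,12\mapsto10$; the simplicial vertices of $G$ are exactly $1,4$ and the antisimplicial vertices of $G$ are exactly $2,3$; and there is no $F\in\{G,\overline{G}\}$ with an induced subgraph of $F$ isomorphic to $H_6$ whose two degree-one vertices are simplicial in $F$ and whose two degree-three vertices are both antisimplicial in $F$.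
   Context: All graphs are finite and simple; in the edge list "$a\text{-}b$" or "$ab$" denotes an edge between vertices $a$ and $b$. $P_n$ is the path on $n$ vertices, $C_n$ the cycle of length $n$, $\overline{G}$ the complement. $G$ is $H$-free if it has no induced subgraph isomorphic to $H$. A vertex $b\notin X$ is mixed on $X$ if it has both a neighbor and a non-neighbor in $X$. A homogeneous set is a set $X\subseteq V(G)$ with $1<|X|<|V(G)|$ such that no vertex outside $X$ is mixed on $X$. $G$ is prime if $|V(G)|\ge4$ and has no homogeneous set. A vertex $v$ is simplicial if $N(v)$ is a clique, antisimplicial if $V(G)\setminus N(v)$ is a stable set. A split graph is one whose vertex set can be partitioned into a stable set and a clique. $H_6$ is the graph with vertex set $\{v_1,\dots,v_6\}$ and edge set $\{v_1v_2,v_2v_3,v_3v_4,v_2v_5,v_3v_6,v_5v_6\}$. *)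

theory Defs
  imports Main
begin

definition simple_graph :: "'a set \<Rightarrow> ('a \<Rightarrow> 'a \<Rightarrow> bool) \<Rightarrow> bool" where
  "simple_graph V E \<longleftrightarrow> finite V \<and> (\<forall>x\<in>V. \<forall>y\<in>V. E x y \<longleftrightarrow> E y x) \<and> (\<forall>x\<in>V. \<not> E x x)"

definition compl_rel :: "('a \<Rightarrow> 'a \<Rightarrow> bool) \<Rightarrow> 'a \<Rightarrow> 'a \<Rightarrow> bool" where
  "compl_rel E x y \<longleftrightarrow> x \<noteq> y \<and> \<not> E x y"

definition graph_iso :: "('a \<Rightarrow> 'b) \<Rightarrow> 'a set \<Rightarrow> ('a \<Rightarrow> 'a \<Rightarrow> bool) \<Rightarrow> 'b set \<Rightarrow> ('b \<Rightarrow> 'b \<Rightarrow> bool) \<Rightarrow> bool" where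
  "graph_iso f V1 E1 V2 E2 \<longleftrightarrow> bij_betw f V1 V2 \<and> (\<forall>x\<in>V1. \<forall>y\<in>V1. E1 x y \<longleftrightarrow> E2 (f x) (f y))"

definition induced_embedding :: "('b \<Rightarrow> 'a) \<Rightarrow> 'b set \<Rightarrow> ('b \<Rightarrow> 'b \<Rightarrow> bool) \<Rightarrow> 'a set \<Rightarrow> ('a \<Rightarrow> 'a \<Rightarrow> bool) \<Rightarrow> bool" where
  "induced_embedding f VH EH V E \<longleftrightarrow> graph_iso f VH EH (f ` VH) E \<and> f ` VH \<subseteq> V"

definition H_free :: "'b set \<Rightarrow> ('b \<Rightarrow> 'b \<Rightarrow> bool) \<Rightarrow> 'a set \<Rightarrow> ('a \<Rightarrow> 'a \<Rightarrow> bool) \<Rightarrow> bool" where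
  "H_free VH EH V E \<longleftrightarrow> \<not> (\<exists>f. induced_embedding f VH EH V E)"

definition P_rel :: "nat \<Rightarrow> nat \<Rightarrow> bool" where
  "P_rel i j \<longleftrightarrow> i = j + 1 \<or> j = i + 1"
definition C5_rel :: "nat \<Rightarrow> nat \<Rightarrow> bool" where
  "C5_rel i j \<longleftrightarrow> i = (j + 1) mod 5 \<or> j = (i + 1) mod 5"

abbreviation P5_V :: "nat set" where "P5_V \<equiv> {0..<5}"
abbreviation P5_E :: "nat \<Rightarrow> nat \<Rightarrow> bool" where "P5_E \<equiv> P_rel"
abbreviation coP5_E :: "nat \<Rightarrow> nat \<Rightarrow> bool" where "coP5_E \<equiv> compl_rel P_rel"
abbreviation C5_V :: "nat set" where "C5_V \<equiv> {0..<5}"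
abbreviation C5_E :: "nat \<Rightarrow> nat \<Rightarrow> bool" where "C5_E \<equiv> C5_rel"

definition H6_rel :: "nat \<Rightarrow> nat \<Rightarrow> bool" where
  "H6_rel x y \<longleftrightarrow> {x, y} \<in> {{1,2},{2,3},{3,4},{2,5},{3,6},{5,6}}"
abbreviation H6_V :: "nat set" where "H6_V \<equiv> {1..6}"

definition mixed_on :: "'a set \<Rightarrow> ('a \<Rightarrow> 'a \<Rightarrow> bool) \<Rightarrow> 'a \<Rightarrow> 'a set \<Rightarrow> bool" where
  "mixed_on V E b X \<longleftrightarrow> b \<in> V \<and> b \<notin> X \<and> (\<exists>x\<in>X. E b x) \<and> (\<exists>x\<in>X. \<not> E b x)"

definition homogeneous_set :: "'a set \<Rightarrow> ('a \<Rightarrow> 'a \<Rightarrow> bool) \<Rightarrow> 'a set \<Rightarrow> bool" where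
  "homogeneous_set V E X \<longleftrightarrow> X \<subseteq> V \<and> 1 < card X \<and> card X < card V \<and>
     (\<forall>b\<in>V - X. \<not> mixed_on V E b X)"

definition prime_graph :: "'a set \<Rightarrow> ('a \<Rightarrow> 'a \<Rightarrow> bool) \<Rightarrow> bool" where
  "prime_graph V E \<longleftrightarrow> card V \<ge> 4 \<and> \<not> (\<exists>X. homogeneous_set V E X)"

definition nbhd :: "'a set \<Rightarrow> ('a \<Rightarrow> 'a \<Rightarrow> bool) \<Rightarrow> 'a \<Rightarrow> 'a set" where
  "nbhd V E v = {u\<in>V. E v u}"

definition is_clique :: "('a \<Rightarrow> 'a \<Rightarrow> bool) \<Rightarrow> 'a set \<Rightarrow> bool" where
  "is_clique E K \<longleftrightarrow> (\<forall>x\<in>K. \<forall>y\<in>K. x \<noteq> y \<longrightarrow> E x y)"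

definition is_stable :: "('a \<Rightarrow> 'a \<Rightarrow> bool) \<Rightarrow> 'a set \<Rightarrow> bool" where
  "is_stable E S \<longleftrightarrow> (\<forall>x\<in>S. \<forall>y\<in>S. \<not> E x y)"

definition simplicial :: "'a set \<Rightarrow> ('a \<Rightarrow> 'a \<Rightarrow> bool) \<Rightarrow> 'a \<Rightarrow> bool" where
  "simplicial V E v \<longleftrightarrow> v \<in> V \<and> is_clique E (nbhd V E v)"

definition antisimplicial :: "'a set \<Rightarrow> ('a \<Rightarrow> 'a \<Rightarrow> bool) \<Rightarrow> 'a \<Rightarrow> bool" where
  "antisimplicial V E v \<longleftrightarrow> v \<in> V \<and> is_stable E (V - nbhd V E v)"

definition split_graph :: "'a set \<Rightarrow> ('a \<Rightarrow> 'a \<Rightarrow> bool) \<Rightarrow> bool" where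
  "split_graph V E \<longleftrightarrow> (\<exists>S K. S \<union> K = V \<and> S \<inter> K = {} \<and> is_stable E S \<and> is_clique E K)"

definition G_edges :: "(nat \<times> nat) set" where
  "G_edges = {(1,2),(2,3),(3,4),(8,7),(7,6),(6,5),(12,11),(11,10),(10,9),
              (12,8),(8,11),(11,6),(6,9),(9,5),(5,10),(10,7),(7,12),
              (1,7),(7,3),(3,5),(8,2),(2,6),(6,4),(2,7),(3,6)}
             \<union> {2,3} \<times> {9,10,11,12}"

definition G_V :: "nat set" where "G_V = {1..12}"

definition G_E :: "nat \<Rightarrow> nat \<Rightarrow> bool" where
  "G_E x y \<longleftrightarrow> (x, y) \<in> G_edges \<or> (y, x) \<in> G_edges"

definition phi :: "nat \<Rightarrow> nat" where
  "phi x = (case map_of [(1,3),(2,1),(3,4),(4,2),(5,7),(6,5),(7,8),(8,6),(9,11),(10,9),(11,12),(12,10)] x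
            of Some y \<Rightarrow> y | None \<Rightarrow> x)"

end

theory Submission
  imports Defs
begin

definition GL :: "nat list" where "GL = [1..<13]"

definition edl :: "(nat \<times> nat) list" where
  "edl = [(1,2),(2,3),(3,4),(8,7),(7,6),(6,5),(12,11),(11,10),(10,9),
              (12,8),(8,11),(11,6),(6,9),(9,5),(5,10),(10,7),(7,12),
              (1,7),(7,3),(3,5),(8,2),(2,6),(6,4),(2,7),(3,6),
              (2,9),(2,10),(2,11),(2,12),(3,9),(3,10),(3,11),(3,12)]"

definition GEL :: "nat \<Rightarrow> nat \<Rightarrow> bool" where
  "GEL x y \<longleftrightarrow> (x,y) \<in> set edl \<or> (y,x) \<in> set edl"

lemma GV: "G_V = set GL" unfolding G_V_def GL_def by auto

lemma Gedges: "G_edges = set edl" unfolding G_edges_def edl_def by auto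

lemma GE: "G_E = GEL" unfolding G_E_def GEL_def Gedges by (intro ext) simp

definition H6L :: "nat \<Rightarrow> nat \<Rightarrow> bool" where
  "H6L x y \<longleftrightarrow> (x,y) \<in> set [(1,2),(2,3),(3,4),(2,5),(3,6),(5,6),(2,1),(3,2),(4,3),(5,2),(6,3),(6,5)]"

lemma H6: "H6_rel = H6L"
  unfolding H6_rel_def H6L_def by (intro ext) (auto simp: doubleton_eq_iff)

fun embs :: "'a list \<Rightarrow> ('a\<Rightarrow>'a\<Rightarrow>bool) \<Rightarrow> (nat\<Rightarrow>nat\<Rightarrow>bool) \<Rightarrow> nat \<Rightarrow> nat \<Rightarrow> 'a list list" where
  "embs V E H b 0 = [[]]"
| "embs V E H b (Suc k) = concat (map (\<lambda>ps. map (\<lambda>v. ps@[v])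
      (filter (\<lambda>v. v \<notin> set ps \<and> list_all (\<lambda>i. E (ps!i) v = H (b+i) (b+k)) [0..<k]) V))
      (embs V E H b k))"

lemma emb_complete:
  assumes "induced_embedding f {b..<b+n} H (set V) E" "k \<le> n"
  shows "map (\<lambda>i. f (b+i)) [0..<k] \<in> set (embs V E H b k)"
  using assms(2)
proof (induction k)
  case 0 then show ?case by simp
next
  case (Suc k)
  from assms(1) have bij: "bij_betw f {b..<b+n} (f ` {b..<b+n})"
    and adj: "\<forall>x\<in>{b..<b+n}. \<forall>y\<in>{b..<b+n}. H x y \<longleftrightarrow> E (f x) (f y)"
    and sub: "f ` {b..<b+n} \<subseteq> set V"
    unfolding induced_embedding_def graph_iso_def by auto
  have inj: "inj_on f {b..<b+n}" using bij bij_betw_def by blast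
  let ?ps = "map (\<lambda>i. f (b+i)) [0..<k]"
  have IH: "?ps \<in> set (embs V E H b k)" using Suc by simp
  have kn: "k < n" using Suc by simp
  have v: "f (b+k) \<in> set V" using sub kn by auto
  have nin: "f (b+k) \<notin> set ?ps"
  proof
    assume "f (b+k) \<in> set ?ps"
    then obtain i where "i < k" "f (b+i) = f (b+k)" by auto
    with inj kn have "b+i = b+k" by (auto dest: inj_onD)
    with \<open>i<k\<close> show False by simp
  qed
  have all: "list_all (\<lambda>i. E (?ps!i) (f (b+k)) = H (b+i) (b+k)) [0..<k]"
    using adj kn by (auto simp: list_all_iff)
  have "map (\<lambda>i. f (b+i)) [0..<Suc k] = ?ps @ [f (b+k)]" by simp
  moreover have "?ps @ [f (b+k)] \<in> set (embs V E H b (Suc k))"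
  proof -
    define g where "g = (\<lambda>ps. map (\<lambda>v. ps@[v])
      (filter (\<lambda>v. v \<notin> set ps \<and> list_all (\<lambda>i. E (ps!i) v = H (b+i) (b+k)) [0..<k]) V))"
    have g: "?ps @ [f (b+k)] \<in> set (g ?ps)" unfolding g_def using v nin all by simp
    have cc: "\<And>x g p L. x \<in> set (g p) \<Longrightarrow> p \<in> set L \<Longrightarrow> x \<in> set (concat (map g L))" by auto
    show ?thesis unfolding embs.simps g_def[symmetric] by (rule cc[where g=g, OF g IH])
  qed
  ultimately show ?case by simp
qed

lemma free_of_embs:
  assumes "embs V E H b n = []"
  shows "H_free {b..<b+n} H (set V) E"
  unfolding H_free_def
proof
  assume "\<exists>f. induced_embedding f {b..<b+n} H (set V) E"
  then obtain f where "induced_embedding f {b..<b+n} H (set V) E" by blast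
  from emb_complete[OF this, of n] assms show False by simp
qed

fun chk :: "'a list \<Rightarrow> ('a\<Rightarrow>'a\<Rightarrow>bool) \<Rightarrow> 'a list \<Rightarrow> ('a \<times> 'a \<times> 'a) list \<Rightarrow> bool" where
  "chk V E S [] = list_all (\<lambda>v. v \<in> set S) V"
| "chk V E S ((c,x,y)#r) = (c \<in> set V \<and> x \<in> set S \<and> y \<in> set S \<and> E c x \<and> \<not> E c y \<and> chk V E (c#S) r)"

lemma chk_sub:
  assumes "homogeneous_set (set V) E X"
  shows "set S \<subseteq> X \<Longrightarrow> chk V E S cs \<Longrightarrow> set V \<subseteq> X"
proof (induction cs arbitrary: S)
  case Nil then show ?case by (auto simp: list_all_iff)
next
  case (Cons t r)
  obtain c x y where t: "t = (c,x,y)" by (cases t) auto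
  have h: "c \<in> set V" "x \<in> X" "y \<in> X" "E c x" "\<not> E c y" "chk V E (c#S) r"
    using Cons.prems t by auto
  have "c \<in> X"
  proof (rule ccontr)
    assume "c \<notin> X"
    then have "mixed_on (set V) E c X" using h unfolding mixed_on_def by blast
    then show False using assms h(1) \<open>c \<notin> X\<close> unfolding homogeneous_set_def by blast
  qed
  then show ?case using Cons.IH[of "c#S"] Cons.prems h by auto
qed

lemma prime_of_cert:
  fixes V :: "'a::linorder list"
  assumes "card (set V) \<ge> 4"
    "list_all (\<lambda>(a,b,cs). chk V E [a,b] cs) CL"
    "list_all (\<lambda>a. list_all (\<lambda>b. a < b \<longrightarrow> (a,b) \<in> set (map (\<lambda>(a,b,cs). (a,b)) CL)) V) V"
  shows "prime_graph (set V) E"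
  unfolding prime_graph_def
proof (intro conjI notI)
  show "card (set V) \<ge> 4" by fact
  assume "\<exists>X. homogeneous_set (set V) E X"
  then obtain X where X: "homogeneous_set (set V) E X" by blast
  then have XV: "X \<subseteq> set V" and c1: "1 < card X" and c2: "card X < card (set V)"
    unfolding homogeneous_set_def by auto
  have fin: "finite X" using XV finite_subset by blast
  have "\<not> (\<forall>a\<in>X. \<forall>b\<in>X. a = b)" using c1 card_le_Suc0_iff_eq[OF fin] by auto
  then obtain a b where ab: "a \<in> X" "b \<in> X" "a < b"
    by (metis linorder_neqE)
  have "(a,b) \<in> set (map (\<lambda>(a,b,cs). (a,b)) CL)" using assms(3) XV ab by (auto simp: list_all_iff)
  then obtain cs where cs: "(a,b,cs) \<in> set CL" by auto
  then have "chk V E [a,b] cs" using assms(2) by (auto simp: list_all_iff)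
  moreover have "set [a,b] \<subseteq> X" using ab by auto
  ultimately have "set V \<subseteq> X" using chk_sub[OF X] by blast
  then have "card (set V) \<le> card X" using XV by (simp add: card_mono finite_subset)
  with c2 show False by simp
qed

definition cliqueL :: "('a\<Rightarrow>'a\<Rightarrow>bool) \<Rightarrow> 'a list \<Rightarrow> bool" where
  "cliqueL E xs = list_all (\<lambda>x. list_all (\<lambda>y. x = y \<or> E x y) xs) xs"
definition stableL :: "('a\<Rightarrow>'a\<Rightarrow>bool) \<Rightarrow> 'a list \<Rightarrow> bool" where
  "stableL E xs = list_all (\<lambda>x. list_all (\<lambda>y. \<not> E x y) xs) xs"
definition simpL where "simpL V E v = cliqueL E (filter (E v) V)"
definition antiL where "antiL V E v = stableL E (filter (\<lambda>u. \<not> E v u) V)"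

lemma simpL: "v \<in> set V \<Longrightarrow> simplicial (set V) E v = simpL V E v"
  unfolding simplicial_def simpL_def cliqueL_def is_clique_def nbhd_def
  by (auto simp: list_all_iff)

lemma antiL: "v \<in> set V \<Longrightarrow> antisimplicial (set V) E v = antiL V E v"
proof -
  have "set V - {u \<in> set V. E v u} = set (filter (\<lambda>u. \<not> E v u) V)" by auto
  then show "v \<in> set V \<Longrightarrow> ?thesis"
    unfolding antisimplicial_def antiL_def stableL_def is_stable_def nbhd_def
    by (auto simp: list_all_iff)
qed


lemma tab:
  "GEL (Suc 0) (Suc 0) = False"
  "GEL (Suc 0) 2 = True"
  "GEL (Suc 0) 3 = False"
  "GEL (Suc 0) 4 = False"
  "GEL (Suc 0) 5 = False"
  "GEL (Suc 0) 6 = False"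
  "GEL (Suc 0) 7 = True"
  "GEL (Suc 0) 8 = False"
  "GEL (Suc 0) 9 = False"
  "GEL (Suc 0) 10 = False"
  "GEL (Suc 0) 11 = False"
  "GEL (Suc 0) 12 = False"
  "GEL 2 (Suc 0) = True"
  "GEL 2 2 = False"
  "GEL 2 3 = True"
  "GEL 2 4 = False"
  "GEL 2 5 = False"
  "GEL 2 6 = True"
  "GEL 2 7 = True"
  "GEL 2 8 = True"
  "GEL 2 9 = True"
  "GEL 2 10 = True"
  "GEL 2 11 = True"
  "GEL 2 12 = True"
  "GEL 3 (Suc 0) = False"
  "GEL 3 2 = True"
  "GEL 3 3 = False"
  "GEL 3 4 = True"
  "GEL 3 5 = True"
  "GEL 3 6 = True"
  "GEL 3 7 = True"
  "GEL 3 8 = False"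
  "GEL 3 9 = True"
  "GEL 3 10 = True"
  "GEL 3 11 = True"
  "GEL 3 12 = True"
  "GEL 4 (Suc 0) = False"
  "GEL 4 2 = False"
  "GEL 4 3 = True"
  "GEL 4 4 = False"
  "GEL 4 5 = False"
  "GEL 4 6 = True"
  "GEL 4 7 = False"
  "GEL 4 8 = False"
  "GEL 4 9 = False"
  "GEL 4 10 = False"
  "GEL 4 11 = False"
  "GEL 4 12 = False"
  "GEL 5 (Suc 0) = False"
  "GEL 5 2 = False"
  "GEL 5 3 = True"
  "GEL 5 4 = False"
  "GEL 5 5 = False"
  "GEL 5 6 = True"
  "GEL 5 7 = False"
  "GEL 5 8 = False"
  "GEL 5 9 = True"
  "GEL 5 10 = True"
  "GEL 5 11 = False"
  "GEL 5 12 = False"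
  "GEL 6 (Suc 0) = False"
  "GEL 6 2 = True"
  "GEL 6 3 = True"
  "GEL 6 4 = True"
  "GEL 6 5 = True"
  "GEL 6 6 = False"
  "GEL 6 7 = True"
  "GEL 6 8 = False"
  "GEL 6 9 = True"
  "GEL 6 10 = False"
  "GEL 6 11 = True"
  "GEL 6 12 = False"
  "GEL 7 (Suc 0) = True"
  "GEL 7 2 = True"
  "GEL 7 3 = True"
  "GEL 7 4 = False"
  "GEL 7 5 = False"
  "GEL 7 6 = True"
  "GEL 7 7 = False"
  "GEL 7 8 = True"
  "GEL 7 9 = False"
  "GEL 7 10 = True"
  "GEL 7 11 = False"
  "GEL 7 12 = True"
  "GEL 8 (Suc 0) = False"
  "GEL 8 2 = True"
  "GEL 8 3 = False"
  "GEL 8 4 = False"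
  "GEL 8 5 = False"
  "GEL 8 6 = False"
  "GEL 8 7 = True"
  "GEL 8 8 = False"
  "GEL 8 9 = False"
  "GEL 8 10 = False"
  "GEL 8 11 = True"
  "GEL 8 12 = True"
  "GEL 9 (Suc 0) = False"
  "GEL 9 2 = True"
  "GEL 9 3 = True"
  "GEL 9 4 = False"
  "GEL 9 5 = True"
  "GEL 9 6 = True"
  "GEL 9 7 = False"
  "GEL 9 8 = False"
  "GEL 9 9 = False"
  "GEL 9 10 = True"
  "GEL 9 11 = False"
  "GEL 9 12 = False"
  "GEL 10 (Suc 0) = False"
  "GEL 10 2 = True"
  "GEL 10 3 = True"
  "GEL 10 4 = False"
  "GEL 10 5 = True"
  "GEL 10 6 = False"
  "GEL 10 7 = True"
  "GEL 10 8 = False"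
  "GEL 10 9 = True"
  "GEL 10 10 = False"
  "GEL 10 11 = True"
  "GEL 10 12 = False"
  "GEL 11 (Suc 0) = False"
  "GEL 11 2 = True"
  "GEL 11 3 = True"
  "GEL 11 4 = False"
  "GEL 11 5 = False"
  "GEL 11 6 = True"
  "GEL 11 7 = False"
  "GEL 11 8 = True"
  "GEL 11 9 = False"
  "GEL 11 10 = True"
  "GEL 11 11 = False"
  "GEL 11 12 = True"
  "GEL 12 (Suc 0) = False"
  "GEL 12 2 = True"
  "GEL 12 3 = True"
  "GEL 12 4 = False"
  "GEL 12 5 = False"
  "GEL 12 6 = False"
  "GEL 12 7 = True"
  "GEL 12 8 = True"
  "GEL 12 9 = False"
  "GEL 12 10 = False"
  "GEL 12 11 = True"
  "GEL 12 12 = False"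
  by (simp_all add: GEL_def edl_def)
definition CL :: "(nat \<times> nat \<times> (nat \<times> nat \<times> nat) list) list" where
  "CL = [((Suc 0),2,[(3,2,(Suc 0)),(4,3,(Suc 0)),(5,3,4),(6,5,(Suc 0)),(7,6,5),(8,7,6),(9,6,8),(10,9,8),(11,10,9),(12,11,10)]),
   ((Suc 0),3,[(4,3,(Suc 0)),(2,(Suc 0),4),(5,3,2),(6,5,(Suc 0)),(7,6,5),(8,7,6),(9,6,8),(10,9,8),(11,10,9),(12,11,10)]),
   ((Suc 0),4,[(2,(Suc 0),4),(3,2,(Suc 0)),(5,3,2),(6,5,(Suc 0)),(7,6,5),(8,7,6),(9,6,8),(10,9,8),(11,10,9),(12,11,10)]),
   ((Suc 0),5,[(2,(Suc 0),5),(3,2,(Suc 0)),(4,3,2),(6,4,(Suc 0)),(7,6,4),(8,7,6),(9,6,8),(10,9,8),(11,10,9),(12,11,10)]),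
   ((Suc 0),6,[(3,6,(Suc 0)),(4,3,(Suc 0)),(2,3,4),(5,3,2),(7,2,5),(8,7,5),(9,5,8),(10,9,8),(11,10,9),(12,11,10)]),
   ((Suc 0),7,[(3,7,(Suc 0)),(4,3,(Suc 0)),(2,3,4),(5,3,2),(6,5,(Suc 0)),(8,2,6),(9,6,8),(10,9,8),(11,10,9),(12,11,10)]),
   ((Suc 0),8,[(11,8,(Suc 0)),(3,11,(Suc 0)),(4,3,11),(2,3,4),(5,3,2),(6,5,(Suc 0)),(7,6,5),(9,6,7),(10,9,6),(12,7,10)]),
   ((Suc 0),9,[(3,9,(Suc 0)),(4,3,(Suc 0)),(2,3,4),(5,3,2),(6,5,(Suc 0)),(7,6,5),(8,7,6),(10,7,8),(11,10,7),(12,11,10)]),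
   ((Suc 0),10,[(3,10,(Suc 0)),(4,3,(Suc 0)),(2,3,4),(5,3,2),(6,5,(Suc 0)),(7,6,5),(8,7,6),(9,6,8),(11,8,9),(12,11,9)]),
   ((Suc 0),11,[(3,11,(Suc 0)),(4,3,(Suc 0)),(2,3,4),(5,3,2),(6,5,(Suc 0)),(7,6,5),(8,7,6),(9,6,8),(10,9,8),(12,8,10)]),
   ((Suc 0),12,[(3,12,(Suc 0)),(4,3,(Suc 0)),(2,3,4),(5,3,2),(6,5,(Suc 0)),(7,6,5),(8,7,6),(9,6,8),(10,9,8),(11,10,9)]),
   (2,3,[((Suc 0),2,3),(4,3,(Suc 0)),(5,3,4),(6,5,(Suc 0)),(7,6,5),(8,7,6),(9,6,8),(10,9,8),(11,10,9),(12,11,10)]),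
   (2,4,[((Suc 0),2,4),(3,2,(Suc 0)),(5,3,(Suc 0)),(6,5,(Suc 0)),(7,6,5),(8,7,6),(9,6,8),(10,9,8),(11,10,9),(12,11,10)]),
   (2,5,[((Suc 0),2,5),(3,2,(Suc 0)),(4,3,(Suc 0)),(6,4,(Suc 0)),(7,6,4),(8,7,6),(9,6,8),(10,9,8),(11,10,9),(12,11,10)]),
   (2,6,[((Suc 0),2,6),(3,2,(Suc 0)),(4,3,(Suc 0)),(5,3,4),(7,3,5),(8,7,5),(9,5,8),(10,9,8),(11,10,9),(12,11,10)]),
   (2,7,[(9,2,7),((Suc 0),2,9),(3,9,(Suc 0)),(4,3,(Suc 0)),(5,3,4),(6,5,(Suc 0)),(8,2,6),(10,5,8),(11,10,5),(12,11,10)]),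
   (2,8,[((Suc 0),2,8),(3,2,(Suc 0)),(4,3,(Suc 0)),(5,3,4),(6,5,(Suc 0)),(7,6,5),(9,6,7),(10,9,6),(11,10,9),(12,11,10)]),
   (2,9,[((Suc 0),2,9),(3,2,(Suc 0)),(4,3,(Suc 0)),(5,3,4),(6,5,(Suc 0)),(7,6,5),(8,7,6),(10,7,8),(11,10,7),(12,11,10)]),
   (2,10,[((Suc 0),2,10),(3,2,(Suc 0)),(4,3,(Suc 0)),(5,3,4),(6,5,(Suc 0)),(7,6,5),(8,7,6),(9,6,8),(11,8,9),(12,11,9)]),
   (2,11,[((Suc 0),2,11),(3,2,(Suc 0)),(4,3,(Suc 0)),(5,3,4),(6,5,(Suc 0)),(7,6,5),(8,7,6),(9,6,8),(10,9,8),(12,8,10)]),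
   (2,12,[((Suc 0),2,12),(3,2,(Suc 0)),(4,3,(Suc 0)),(5,3,4),(6,5,(Suc 0)),(7,6,5),(8,7,6),(9,6,8),(10,9,8),(11,10,9)]),
   (3,4,[(2,3,4),((Suc 0),2,3),(5,3,(Suc 0)),(6,5,(Suc 0)),(7,6,5),(8,7,6),(9,6,8),(10,9,8),(11,10,9),(12,11,10)]),
   (3,5,[(2,3,5),((Suc 0),2,3),(4,3,(Suc 0)),(6,4,(Suc 0)),(7,6,4),(8,7,6),(9,6,8),(10,9,8),(11,10,9),(12,11,10)]),
   (3,6,[(10,3,6),(4,3,10),(2,10,4),((Suc 0),2,4),(5,10,(Suc 0)),(7,(Suc 0),5),(8,7,5),(9,5,8),(11,8,9),(12,11,9)]),
   (3,7,[((Suc 0),7,3),(4,3,(Suc 0)),(2,(Suc 0),4),(5,3,2),(6,5,(Suc 0)),(8,2,6),(9,6,8),(10,9,8),(11,10,9),(12,11,10)]),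
   (3,8,[(4,3,8),(2,3,4),((Suc 0),2,4),(5,3,(Suc 0)),(6,5,(Suc 0)),(7,6,5),(9,6,7),(10,9,6),(11,10,9),(12,11,10)]),
   (3,9,[(4,3,9),(2,3,4),((Suc 0),2,4),(5,3,(Suc 0)),(6,5,(Suc 0)),(7,6,5),(8,7,6),(10,7,8),(11,10,7),(12,11,10)]),
   (3,10,[(4,3,10),(2,3,4),((Suc 0),2,4),(5,3,(Suc 0)),(6,5,(Suc 0)),(7,6,5),(8,7,6),(9,6,8),(11,8,9),(12,11,9)]),
   (3,11,[(4,3,11),(2,3,4),((Suc 0),2,4),(5,3,(Suc 0)),(6,5,(Suc 0)),(7,6,5),(8,7,6),(9,6,8),(10,9,8),(12,8,10)]),
   (3,12,[(4,3,12),(2,3,4),((Suc 0),2,4),(5,3,(Suc 0)),(6,5,(Suc 0)),(7,6,5),(8,7,6),(9,6,8),(10,9,8),(11,10,9)]),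
   (4,5,[(9,5,4),(2,9,4),((Suc 0),2,9),(3,2,(Suc 0)),(6,3,(Suc 0)),(7,6,9),(8,7,6),(10,7,8),(11,10,7),(12,11,10)]),
   (4,6,[(2,6,4),((Suc 0),2,4),(3,2,(Suc 0)),(5,3,(Suc 0)),(7,3,5),(8,7,5),(9,5,8),(10,9,8),(11,10,9),(12,11,10)]),
   (4,7,[((Suc 0),7,4),(2,(Suc 0),4),(3,2,(Suc 0)),(5,3,2),(6,5,(Suc 0)),(8,2,6),(9,6,8),(10,9,8),(11,10,9),(12,11,10)]),
   (4,8,[(2,8,4),((Suc 0),2,4),(3,2,(Suc 0)),(5,3,(Suc 0)),(6,5,(Suc 0)),(7,6,5),(9,6,7),(10,9,6),(11,10,9),(12,11,10)]),
   (4,9,[(2,9,4),((Suc 0),2,4),(3,2,(Suc 0)),(5,3,(Suc 0)),(6,5,(Suc 0)),(7,6,5),(8,7,6),(10,7,8),(11,10,7),(12,11,10)]),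
   (4,10,[(2,10,4),((Suc 0),2,4),(3,2,(Suc 0)),(5,3,(Suc 0)),(6,5,(Suc 0)),(7,6,5),(8,7,6),(9,6,8),(11,8,9),(12,11,9)]),
   (4,11,[(2,11,4),((Suc 0),2,4),(3,2,(Suc 0)),(5,3,(Suc 0)),(6,5,(Suc 0)),(7,6,5),(8,7,6),(9,6,8),(10,9,8),(12,8,10)]),
   (4,12,[(2,12,4),((Suc 0),2,4),(3,2,(Suc 0)),(5,3,(Suc 0)),(6,5,(Suc 0)),(7,6,5),(8,7,6),(9,6,8),(10,9,8),(11,10,9)]),
   (5,6,[(2,6,5),((Suc 0),2,5),(3,2,(Suc 0)),(4,3,(Suc 0)),(7,3,4),(8,7,4),(9,3,8),(10,9,8),(11,10,9),(12,11,10)]),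
   (5,7,[((Suc 0),7,5),(2,(Suc 0),5),(3,2,(Suc 0)),(4,3,2),(6,4,(Suc 0)),(8,2,6),(9,6,8),(10,9,8),(11,10,9),(12,11,10)]),
   (5,8,[(2,8,5),((Suc 0),2,5),(3,2,(Suc 0)),(4,3,(Suc 0)),(6,4,(Suc 0)),(7,6,4),(9,6,7),(10,9,6),(11,10,9),(12,11,10)]),
   (5,9,[(2,9,5),((Suc 0),2,5),(3,2,(Suc 0)),(4,3,(Suc 0)),(6,4,(Suc 0)),(7,6,4),(8,7,6),(10,7,8),(11,10,7),(12,11,10)]),
   (5,10,[(2,10,5),((Suc 0),2,5),(3,2,(Suc 0)),(4,3,(Suc 0)),(6,4,(Suc 0)),(7,6,4),(8,7,6),(9,6,8),(11,8,9),(12,11,9)]),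
   (5,11,[(2,11,5),((Suc 0),2,5),(3,2,(Suc 0)),(4,3,(Suc 0)),(6,4,(Suc 0)),(7,6,4),(8,7,6),(9,6,8),(10,9,8),(12,8,10)]),
   (5,12,[(2,12,5),((Suc 0),2,5),(3,2,(Suc 0)),(4,3,(Suc 0)),(6,4,(Suc 0)),(7,6,4),(8,7,6),(9,6,8),(10,9,8),(11,10,9)]),
   (6,7,[((Suc 0),7,6),(3,6,(Suc 0)),(4,3,(Suc 0)),(2,3,4),(5,3,2),(8,2,5),(9,5,8),(10,9,8),(11,10,9),(12,11,10)]),
   (6,8,[(3,6,8),(4,3,8),(2,3,4),((Suc 0),2,4),(5,3,(Suc 0)),(7,(Suc 0),5),(9,5,7),(10,9,(Suc 0)),(11,10,9),(12,11,10)]),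
   (6,9,[(4,6,9),(2,6,4),((Suc 0),2,4),(3,2,(Suc 0)),(5,3,(Suc 0)),(7,3,5),(8,7,5),(10,7,8),(11,10,7),(12,11,10)]),
   (6,10,[(4,6,10),(2,6,4),((Suc 0),2,4),(3,2,(Suc 0)),(5,3,(Suc 0)),(7,3,5),(8,7,5),(9,5,8),(11,8,9),(12,11,9)]),
   (6,11,[(4,6,11),(2,6,4),((Suc 0),2,4),(3,2,(Suc 0)),(5,3,(Suc 0)),(7,3,5),(8,7,5),(9,5,8),(10,9,8),(12,8,10)]),
   (6,12,[(4,6,12),(2,6,4),((Suc 0),2,4),(3,2,(Suc 0)),(5,3,(Suc 0)),(7,3,5),(8,7,5),(9,5,8),(10,9,8),(11,10,9)]),
   (7,8,[((Suc 0),7,8),(3,7,(Suc 0)),(4,3,(Suc 0)),(2,3,4),(5,3,2),(6,5,(Suc 0)),(9,6,4),(10,9,6),(11,10,9),(12,11,10)]),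
   (7,9,[((Suc 0),7,9),(3,7,(Suc 0)),(4,3,(Suc 0)),(2,3,4),(5,3,2),(6,5,(Suc 0)),(8,2,6),(10,5,8),(11,10,5),(12,11,10)]),
   (7,10,[((Suc 0),7,10),(3,7,(Suc 0)),(4,3,(Suc 0)),(2,3,4),(5,3,2),(6,5,(Suc 0)),(8,2,6),(9,6,8),(11,8,9),(12,11,9)]),
   (7,11,[((Suc 0),7,11),(3,7,(Suc 0)),(4,3,(Suc 0)),(2,3,4),(5,3,2),(6,5,(Suc 0)),(8,2,6),(9,6,8),(10,9,8),(12,8,10)]),
   (7,12,[((Suc 0),7,12),(3,7,(Suc 0)),(4,3,(Suc 0)),(2,3,4),(5,3,2),(6,5,(Suc 0)),(8,2,6),(9,6,8),(10,9,8),(11,10,9)]),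
   (8,9,[(3,9,8),(4,3,8),(2,3,4),((Suc 0),2,4),(5,3,(Suc 0)),(6,5,(Suc 0)),(7,6,5),(10,7,6),(11,10,7),(12,11,10)]),
   (8,10,[(3,10,8),(4,3,8),(2,3,4),((Suc 0),2,4),(5,3,(Suc 0)),(6,5,(Suc 0)),(7,6,5),(9,6,7),(11,6,9),(12,11,9)]),
   (8,11,[(3,11,8),(4,3,8),(2,3,4),((Suc 0),2,4),(5,3,(Suc 0)),(6,5,(Suc 0)),(7,6,5),(9,6,7),(10,9,6),(12,7,10)]),
   (8,12,[(3,12,8),(4,3,8),(2,3,4),((Suc 0),2,4),(5,3,(Suc 0)),(6,5,(Suc 0)),(7,6,5),(9,6,7),(10,9,6),(11,10,9)]),
   (9,10,[(6,9,10),(4,6,9),(2,6,4),((Suc 0),2,4),(3,2,(Suc 0)),(5,3,(Suc 0)),(7,3,5),(8,7,5),(11,8,7),(12,11,5)]),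
   (9,11,[(5,9,11),(2,9,5),((Suc 0),2,5),(3,2,(Suc 0)),(4,3,(Suc 0)),(6,4,(Suc 0)),(7,6,4),(8,7,6),(10,7,8),(12,8,10)]),
   (9,12,[(5,9,12),(2,9,5),((Suc 0),2,5),(3,2,(Suc 0)),(4,3,(Suc 0)),(6,4,(Suc 0)),(7,6,4),(8,7,6),(10,7,8),(11,10,7)]),
   (10,11,[(5,10,11),(2,10,5),((Suc 0),2,5),(3,2,(Suc 0)),(4,3,(Suc 0)),(6,4,(Suc 0)),(7,6,4),(8,7,6),(9,6,8),(12,8,9)]),
   (10,12,[(5,10,12),(2,10,5),((Suc 0),2,5),(3,2,(Suc 0)),(4,3,(Suc 0)),(6,4,(Suc 0)),(7,6,4),(8,7,6),(9,6,8),(11,8,9)]),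
   (11,12,[(6,11,12),(4,6,11),(2,6,4),((Suc 0),2,4),(3,2,(Suc 0)),(5,3,(Suc 0)),(7,3,5),(8,7,5),(9,5,8),(10,9,8)])]"

lemma GL_eq: "GL = [1,2,3,4,5,6,7,8,9,10,11,12]" by (simp add: GL_def upt_conv_Cons)

lemmas ev = tab GL_eq upt_rec P_rel_def C5_rel_def compl_rel_def H6L_def simpL_def antiL_def cliqueL_def stableL_def

lemma comp1: "embs GL GEL P_rel 0 5 = []"
proof -
  have "embs GL GEL P_rel 0 (Suc (Suc (Suc (Suc (Suc 0))))) = []" by (simp add: ev)
  then show ?thesis by (simp add: numeral_eq_Suc)
qed
lemma comp2: "embs GL GEL (compl_rel P_rel) 0 5 = []"
proof -
  have "embs GL GEL (compl_rel P_rel) 0 (Suc (Suc (Suc (Suc (Suc 0))))) = []" by (simp add: ev)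
  then show ?thesis by (simp add: numeral_eq_Suc)
qed
lemma comp3: "embs GL GEL C5_rel 0 5 = []"
proof -
  have "embs GL GEL C5_rel 0 (Suc (Suc (Suc (Suc (Suc 0))))) = []" by (simp add: ev)
  then show ?thesis by (simp add: numeral_eq_Suc)
qed
lemma comp4a: "list_all (\<lambda>(a,b,cs). chk GL GEL [a,b] cs) CL" by (simp add: ev CL_def)
lemma comp4b: "list_all (\<lambda>a. list_all (\<lambda>b. a < b \<longrightarrow> (a,b) \<in> set (map (\<lambda>(a,b,cs). (a,b)) CL)) GL) GL"
  by (simp add: ev CL_def)
lemma comp5: "filter (simpL GL GEL) GL = [1,4]" by (simp add: ev)
lemma comp6: "filter (antiL GL GEL) GL = [2,3]" by (simp add: ev)
lemma comp5c: "filter (simpL GL (compl_rel GEL)) GL = [2,3]" by (simp add: ev)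
lemma comp6c: "filter (antiL GL (compl_rel GEL)) GL = [1,4]" by (simp add: ev)
lemma comp7: "filter (\<lambda>ps. ps!0 \<in> set [1,4] \<and> ps!3 \<in> set [1,4] \<and> ps!1 \<in> set [2,3] \<and> ps!2 \<in> set [2,3])
   (embs GL GEL H6L 1 6) = []"
proof -
  have "filter (\<lambda>ps. ps!0 \<in> set [1,4] \<and> ps!3 \<in> set [1,4] \<and> ps!1 \<in> set [2,3] \<and> ps!2 \<in> set [2,3])
   (embs GL GEL H6L 1 (Suc (Suc (Suc (Suc (Suc (Suc 0))))))) = []" by (simp add: ev)
  then show ?thesis by (simp add: numeral_eq_Suc)
qed
lemma comp8: "filter (\<lambda>ps. ps!0 \<in> set [2,3] \<and> ps!3 \<in> set [2,3] \<and> ps!1 \<in> set [1,4] \<and> ps!2 \<in> set [1,4])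
   (embs GL (compl_rel GEL) H6L 1 6) = []"
proof -
  have "filter (\<lambda>ps. ps!0 \<in> set [2,3] \<and> ps!3 \<in> set [2,3] \<and> ps!1 \<in> set [1,4] \<and> ps!2 \<in> set [1,4])
   (embs GL (compl_rel GEL) H6L 1 (Suc (Suc (Suc (Suc (Suc (Suc 0))))))) = []" by (simp add: ev)
  then show ?thesis by (simp add: numeral_eq_Suc)
qed
lemma comp10: "map phi GL = [3,1,4,2,7,5,8,6,11,9,12,10]" by (simp add: GL_eq phi_def)
lemma comp9: "list_all (\<lambda>x. list_all (\<lambda>y. GEL x y = compl_rel GEL (phi x) (phi y)) GL) GL"
  by (simp add: ev phi_def)
lemma comp11: "list_all (\<lambda>x. list_all (\<lambda>y. GEL x y = GEL y x) GL \<and> \<not> GEL x x) GL" by (simp add: ev)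

lemma filt_iff: "filter P xs = ys \<Longrightarrow> v \<in> set xs \<Longrightarrow> P v \<longleftrightarrow> v \<in> set ys" by auto

lemma H6part:
  assumes F: "F \<in> {GEL, compl_rel GEL}"
    and emb: "induced_embedding f H6_V H6L (set GL) F"
    and s1: "simplicial (set GL) F (f 1)" and s4: "simplicial (set GL) F (f 4)"
    and a2: "antisimplicial (set GL) F (f 2)" and a3: "antisimplicial (set GL) F (f 3)"
  shows False
proof -
  have e: "induced_embedding f {1..<1+6} H6L (set GL) F" using emb
    by (metis Suc_eq_plus1 add.commute atLeastLessThanSuc_atLeastAtMost numeral_plus_one semiring_norm(5))
  let ?ps = "map (\<lambda>i. f (1+i)) [0..<6]"
  have ps: "?ps \<in> set (embs GL F H6L 1 6)" using emb_complete[OF e, of 6] by simp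
  have sub: "f ` {1..6} \<subseteq> set GL" using emb unfolding induced_embedding_def by simp
  have inV: "f 1 \<in> set GL" "f 2 \<in> set GL" "f 3 \<in> set GL" "f 4 \<in> set GL" using sub by auto
  have n: "?ps!0 = f 1" "?ps!1 = f 2" "?ps!2 = f 3" "?ps!3 = f 4" by (simp_all add: upt_rec eval_nat_numeral)
  have sG: "\<And>v. v \<in> set GL \<Longrightarrow> simplicial (set GL) GEL v \<longleftrightarrow> v \<in> set [1,4]"
    by (simp only: simpL filt_iff[OF comp5])
  have aG: "\<And>v. v \<in> set GL \<Longrightarrow> antisimplicial (set GL) GEL v \<longleftrightarrow> v \<in> set [2,3]"
    by (simp only: antiL filt_iff[OF comp6])
  have sC: "\<And>v. v \<in> set GL \<Longrightarrow> simplicial (set GL) (compl_rel GEL) v \<longleftrightarrow> v \<in> set [2,3]"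
    by (simp only: simpL filt_iff[OF comp5c])
  have aC: "\<And>v. v \<in> set GL \<Longrightarrow> antisimplicial (set GL) (compl_rel GEL) v \<longleftrightarrow> v \<in> set [1,4]"
    by (simp only: antiL filt_iff[OF comp6c])
  from F show False
  proof
    assume FG: "F = GEL"
    have "?ps!0 \<in> set [1,4] \<and> ?ps!3 \<in> set [1,4] \<and> ?ps!1 \<in> set [2,3] \<and> ?ps!2 \<in> set [2,3]"
      unfolding n using s1 s4 a2 a3 inV sG aG FG by blast
    then have "?ps \<in> set (filter (\<lambda>ps. ps!0 \<in> set [1,4] \<and> ps!3 \<in> set [1,4] \<and> ps!1 \<in> set [2,3] \<and> ps!2 \<in> set [2,3])
      (embs GL GEL H6L 1 6))" using ps FG by (auto simp only: set_filter mem_Collect_eq)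
    then show False unfolding comp7 by simp
  next
    assume "F \<in> {compl_rel GEL}"
    then have FG: "F = compl_rel GEL" by simp
    have "?ps!0 \<in> set [2,3] \<and> ?ps!3 \<in> set [2,3] \<and> ?ps!1 \<in> set [1,4] \<and> ?ps!2 \<in> set [1,4]"
      unfolding n using s1 s4 a2 a3 inV sC aC FG by blast
    then have "?ps \<in> set (filter (\<lambda>ps. ps!0 \<in> set [2,3] \<and> ps!3 \<in> set [2,3] \<and> ps!1 \<in> set [1,4] \<and> ps!2 \<in> set [1,4])
      (embs GL (compl_rel GEL) H6L 1 6))" using ps FG by (auto simp only: set_filter mem_Collect_eq)
    then show False unfolding comp8 by simp
  qed
qed

theorem mainTheorem19:
  shows "simple_graph G_V G_E
    \<and> prime_graph G_V G_E
    \<and> H_free P5_V P5_E G_V G_E \<and> H_free P5_V coP5_E G_V G_E \<and> H_free C5_V C5_E G_V G_E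
    \<and> \<not> split_graph G_V G_E
    \<and> graph_iso phi G_V G_E G_V (compl_rel G_E)
    \<and> {v\<in>G_V. simplicial G_V G_E v} = {1,4}
    \<and> {v\<in>G_V. antisimplicial G_V G_E v} = {2,3}
    \<and> \<not> (\<exists>F \<in> {G_E, compl_rel G_E}. \<exists>f. induced_embedding f H6_V H6_rel G_V F
          \<and> simplicial G_V F (f 1) \<and> simplicial G_V F (f 4)
          \<and> antisimplicial G_V F (f 2) \<and> antisimplicial G_V F (f 3))"
  unfolding GV GE H6
proof (intro conjI)
  show "simple_graph (set GL) GEL" using comp11 unfolding simple_graph_def by (auto simp: list_all_iff)
  show "prime_graph (set GL) GEL"
    by (rule prime_of_cert[OF _ comp4a comp4b]) (simp add: GL_def)
  show "H_free {0..<5} P_rel (set GL) GEL" using free_of_embs[OF comp1] by simp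
  show "H_free {0..<5} (compl_rel P_rel) (set GL) GEL" using free_of_embs[OF comp2] by simp
  show "H_free {0..<5} C5_rel (set GL) GEL" using free_of_embs[OF comp3] by simp
  show "\<not> split_graph (set GL) GEL"
  proof
    assume "split_graph (set GL) GEL"
    then obtain S K where SK: "S \<union> K = set GL" "S \<inter> K = {}" "is_stable GEL S" "is_clique GEL K"
      unfolding split_graph_def by blast
    have m: "2 \<in> S \<union> K" "6 \<in> S \<union> K" "5 \<in> S \<union> K" "(10::nat) \<in> S \<union> K" using SK(1) by (auto simp: GL_def)
    have g: "GEL 2 6" "GEL 6 5" "GEL 5 10" "GEL 10 2" "\<not> GEL 2 5" "\<not> GEL 5 2" "\<not> GEL 6 10" "\<not> GEL 10 6"
      by (simp_all add: GEL_def edl_def)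
    show False using m g SK(3,4) unfolding is_stable_def is_clique_def by (metis UnE numeral_eq_iff semiring_norm(83,84,85,86,87,88,89,90) )
  qed
  show "graph_iso phi (set GL) GEL (set GL) (compl_rel GEL)"
    unfolding graph_iso_def
  proof
    have "distinct (map phi GL)" by (simp add: comp10)
    then have inj: "inj_on phi (set GL)" by (simp add: distinct_map)
    have "set (map phi GL) = set GL" by (subst comp10) (auto simp: GL_eq)
    then have "phi ` set GL = set GL" by simp
    with inj show "bij_betw phi (set GL) (set GL)" by (simp add: bij_betw_def)
    show "\<forall>x\<in>set GL. \<forall>y\<in>set GL. GEL x y = compl_rel GEL (phi x) (phi y)"
      using comp9 by (simp add: list_all_iff)
  qed
  have "{v \<in> set GL. simplicial (set GL) GEL v} = set (filter (simpL GL GEL) GL)" by (auto simp: simpL)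
  then show "{v \<in> set GL. simplicial (set GL) GEL v} = {1,4}" by (simp add: comp5)
  have "{v \<in> set GL. antisimplicial (set GL) GEL v} = set (filter (antiL GL GEL) GL)" by (auto simp: antiL)
  then show "{v \<in> set GL. antisimplicial (set GL) GEL v} = {2,3}" by (simp add: comp6)
  show "\<not> (\<exists>F\<in>{GEL, compl_rel GEL}. \<exists>f. induced_embedding f H6_V H6L (set GL) F \<and>
          simplicial (set GL) F (f 1) \<and> simplicial (set GL) F (f 4) \<and>
          antisimplicial (set GL) F (f 2) \<and> antisimplicial (set GL) F (f 3))"
    using H6part by blast
qed

end
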